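(* If $n$ is large enough, then $\mathrm{ex}^{\mathrm{col}}(n,(C_4,K_2),F_2)=\binom{\lfloor n/2\rfloor}{2}\binom{\lceil n/2\rceil}{2}+1$.
   Context: $F_2$ (the 2-fan) is the graph consisting of two triangles sharing exactly one vertex. $C_4$ is the 4-cycle. $\mathcal N(H,G)$ is the number of subgraphs of $G$ isomorphic to $H$. For a graph $G$ with edges colored $1,2$, $G_i$ is the subgraph of edges of color $i$; $\mathrm{ex}^{\mathrm{col}}(n,(H_1,H_2),F)$ is the maximum of $\mathcal N(H_1,G_1)+\mathcal N(H_2,G_2)$ over all $F$-free $n$-vertex graphs $G$ and all 2-colorings of their edges. *)

theory Defs
  imports Main
begin

definition is_graph_on :: "nat \<Rightarrow> nat set set \<Rightarrow> bool" where
  "is_graph_on n E \<longleftrightarrow> (\<forall>e\<in>E. e \<subseteq> {..<n} \<and> card e = 2)"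

text \<open>The 2-fan F_2: two triangles sharing exactly one vertex. G contains F_2 as a
(not necessarily induced) subgraph iff there are five distinct vertices a,b,c,d,e
with ab, ac, bc, ad, ae, de all edges.\<close>

definition F2_free :: "nat set set \<Rightarrow> bool" where
  "F2_free E \<longleftrightarrow> \<not> (\<exists>a b c d e. distinct [a, b, c, d, e] \<and>
      {a, b} \<in> E \<and> {a, c} \<in> E \<and> {b, c} \<in> E \<and>
      {a, d} \<in> E \<and> {a, e} \<in> E \<and> {d, e} \<in> E)"

definition is_C4 :: "nat set set \<Rightarrow> bool" where
  "is_C4 S \<longleftrightarrow> (\<exists>a b c d. distinct [a, b, c, d] \<and> S = {{a, b}, {b, c}, {c, d}, {d, a}})"

text \<open>N(C_4, G): number of subgraphs of G isomorphic to C_4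
(subgraphs without isolated vertices are determined by their edge set).\<close>

definition num_C4 :: "nat set set \<Rightarrow> nat" where
  "num_C4 E = card {S. S \<subseteq> E \<and> is_C4 S}"

text \<open>N(K_2, G) is the number of edges, i.e. card E.
A 2-colouring of E is given by the set E1 \<subseteq> E of edges of colour 1;
colour 2 edges are E - E1.\<close>

definition excol_C4_K2_F2 :: "nat \<Rightarrow> nat" where
  "excol_C4_K2_F2 n = Max {num_C4 E1 + card (E - E1) | E E1.
      is_graph_on n E \<and> F2_free E \<and> E1 \<subseteq> E}"

end

theory Submission
  imports Defs
begin

definition grph :: "nat set \<Rightarrow> nat set set \<Rightarrow> bool" where
  "grph V E \<longleftrightarrow> finite V \<and> (\<forall>e\<in>E. e \<subseteq> V \<and> card e = 2)"

definition nb :: "nat set set \<Rightarrow> nat \<Rightarrow> nat set" where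
  "nb E v = {u. {v, u} \<in> E}"

lemma grph_edge: "grph V E \<Longrightarrow> {x, y} \<in> E \<Longrightarrow> x \<noteq> y \<and> x \<in> V \<and> y \<in> V"
proof -
  assume g: "grph V E" and e: "{x, y} \<in> E"
  then have "{x,y} \<subseteq> V" "card {x,y} = 2" unfolding grph_def by auto
  moreover have "x \<noteq> y" using \<open>card {x,y} = 2\<close> by (cases "x = y") auto
  ultimately show ?thesis by auto
qed

lemma grph_finE: "grph V E \<Longrightarrow> finite E"
  unfolding grph_def by (metis Pow_iff finite_Pow_iff finite_subset subsetI)

lemma nb_sub: "grph V E \<Longrightarrow> nb E v \<subseteq> V"
  unfolding nb_def using grph_edge by blast

lemma nb_not: "grph V E \<Longrightarrow> v \<notin> nb E v"
  unfolding nb_def grph_def by fastforce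

lemma nb_fin: "grph V E \<Longrightarrow> finite (nb E v)"
  using nb_sub[of V E v] unfolding grph_def by (blast intro: finite_subset)

lemma nb_sym: "u \<in> nb E v \<longleftrightarrow> v \<in> nb E u"
  unfolding nb_def by (simp add: insert_commute)

lemma F2_freeD:
  assumes "F2_free E" "{a, b} \<in> E" "{a, c} \<in> E" "{b, c} \<in> E" "{a, d} \<in> E" "{a, e} \<in> E" "{d, e} \<in> E"
    "distinct [a, b, c, d, e]"
  shows False
  using assms unfolding F2_free_def by blast

lemma F2_free_mono: "F2_free E \<Longrightarrow> E' \<subseteq> E \<Longrightarrow> F2_free E'"
  unfolding F2_free_def by blast

lemma edge_split:
  assumes g: "grph V E"
  shows "card E = card {e\<in>E. v \<notin> e} + card (nb E v)"
proof -
  have fin: "finite E" using grph_finE g by blast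
  have "{e\<in>E. v \<in> e} = (\<lambda>u. {v, u}) ` nb E v"
  proof
    show "{e \<in> E. v \<in> e} \<subseteq> (\<lambda>u. {v, u}) ` nb E v"
    proof
      fix e assume "e \<in> {e \<in> E. v \<in> e}"
      then have e: "e \<in> E" "v \<in> e" by auto
      then have "card e = 2" using g grph_def by blast
      then obtain x y where "e = {x, y}" "x \<noteq> y" using card_2_iff by metis
      then have "e = {v, (if x = v then y else x)}" using e by auto
      then show "e \<in> (\<lambda>u. {v, u}) ` nb E v" unfolding nb_def using e by auto
    qed
  next
    show "(\<lambda>u. {v, u}) ` nb E v \<subseteq> {e \<in> E. v \<in> e}" unfolding nb_def by auto
  qed
  moreover have "inj_on (\<lambda>u. {v, u}) (nb E v)"
    using nb_not[OF g, of v] by (auto simp: inj_on_def doubleton_eq_iff)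
  ultimately have "card {e\<in>E. v \<in> e} = card (nb E v)" by (simp add: card_image)
  moreover have "card E = card {e\<in>E. v \<notin> e} + card {e\<in>E. v \<in> e}"
    using fin by (subst card_Un_disjoint[symmetric]) (auto intro: arg_cong[where f=card])
  ultimately show ?thesis by simp
qed

lemma del_grph: "grph V E \<Longrightarrow> grph (V - {v}) {e\<in>E. v \<notin> e}"
  unfolding grph_def by auto

lemma nb_del: "nb {e\<in>E. v \<notin> e} u \<subseteq> nb E u"
  unfolding nb_def by auto

definition K :: "nat \<Rightarrow> nat" where "K n = (n div 2) * ((n + 1) div 2)"

lemma K_Suc: "K (Suc n) = K n + Suc n div 2"
proof -
  obtain j where "n = 2*j \<or> n = 2*j+1" by (metis odd_two_times_div_two_succ dvd_mult_div_cancel even_iff_mod_2_eq_zero)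
  then show ?thesis unfolding K_def
    by (elim disjE) (simp_all add: algebra_simps)
qed

lemma common_nb:
  assumes g: "grph V E" and "card V = n" and "{a, b} \<in> E"
    and "card (nb E a) + card (nb E b) > n"
  shows "\<exists>c. c \<in> nb E a \<and> c \<in> nb E b"
proof (rule ccontr)
  assume "\<not> ?thesis"
  then have "nb E a \<inter> nb E b = {}" by blast
  then have "card (nb E a \<union> nb E b) = card (nb E a) + card (nb E b)"
    using nb_fin[OF g] card_Un_disjoint by blast
  moreover have "card (nb E a \<union> nb E b) \<le> n"
    using nb_sub[OF g] assms(2) g grph_def card_mono by (metis Un_least)
  ultimately show False using assms(4) by simp
qed

lemma mantel:
  "grph V E \<Longrightarrow> card V = n \<Longrightarrow> (\<forall>a b c. {a,b} \<in> E \<longrightarrow> {a,c} \<in> E \<longrightarrow> {b,c} \<notin> E)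
    \<Longrightarrow> card E \<le> K n"
proof (induction n arbitrary: V E)
  case 0
  then have "E = {}" unfolding grph_def by (metis card_0_eq card.empty ex_in_conv subset_empty zero_neq_numeral)
  then show ?case by simp
next
  case (Suc n)
  show ?case
  proof (cases "\<exists>v\<in>V. card (nb E v) \<le> Suc n div 2")
    case True
    then obtain v where v: "v \<in> V" "card (nb E v) \<le> Suc n div 2" by blast
    have "card {e\<in>E. v \<notin> e} \<le> K n"
      apply (rule Suc.IH[OF del_grph[OF Suc.prems(1)]])
      using Suc.prems v by auto
    then show ?thesis using edge_split[OF Suc.prems(1), of v] v K_Suc[of n] by simp
  next
    case False
    show ?thesis
    proof (cases "E = {}")
      case True then show ?thesis by simp
    next
      case False2: False
      then obtain e where "e \<in> E" by blast
      then obtain a b where ab: "{a,b} \<in> E" using Suc.prems(1) grph_def card_2_iff by metis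
      then have "a \<in> V" "b \<in> V" using grph_edge Suc.prems(1) by auto
      then have "card (nb E a) \<ge> Suc n div 2 + 1" "card (nb E b) \<ge> Suc n div 2 + 1" using False by (auto simp: not_le)
      then have "card (nb E a) + card (nb E b) > Suc n" by linarith
      then obtain c where "c \<in> nb E a" "c \<in> nb E b" using common_nb[OF Suc.prems(1) Suc.prems(2) ab] by blast
      then show ?thesis using Suc.prems(3) ab unfolding nb_def by blast
    qed
  qed
qed


lemma nb_iff: "x \<in> nb E a \<longleftrightarrow> {a, x} \<in> E"
  unfolding nb_def by simp

lemma K4_closed:
  assumes F: "F2_free E" and g: "grph V E"
    and tri: "\<forall>a b. {a,b} \<in> E \<longrightarrow> (\<exists>c. {a,c} \<in> E \<and> {b,c} \<in> E)"
    and e: "{p,q} \<in> E" "{p,r} \<in> E" "{p,s} \<in> E" "{q,r} \<in> E" "{q,s} \<in> E" "{r,s} \<in> E"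
    and np: "nb E p \<subseteq> {q,r,s}"
  shows "nb E q \<subseteq> {p,r,s}"
proof
  fix y assume y: "y \<in> nb E q"
  show "y \<in> {p,r,s}"
  proof (rule ccontr)
    assume yn: "y \<notin> {p,r,s}"
    have yq: "{q,y} \<in> E" using y nb_iff by metis
    then obtain z where z: "{q,z} \<in> E" "{y,z} \<in> E" using tri by blast
    have d: "p \<noteq> q" "p \<noteq> r" "p \<noteq> s" "q \<noteq> r" "q \<noteq> s" "r \<noteq> s" "q \<noteq> y" "y \<noteq> z" "q \<noteq> z"
      using grph_edge[OF g] e yq z by blast+
    show False
    proof (cases "z = p")
      case True
      then have "y \<in> nb E p" using z nb_iff by (metis insert_commute)
      then show False using np yn y nb_not[OF g, of q] by auto
    next
      case zp: False
      show False
      proof (cases "z = r")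
        case True
        show False by (rule F2_freeD[OF F, of q y r p s]) (use e yq z True d yn zp in \<open>auto simp: insert_commute\<close>)
      next
        case zr: False
        show False
        proof (cases "z = s")
          case True
          show False by (rule F2_freeD[OF F, of q y s p r]) (use e yq z True d yn zp in \<open>auto simp: insert_commute\<close>)
        next
          case zs: False
          show False by (rule F2_freeD[OF F, of q y z p r]) (use e yq z d yn zp zr zs in \<open>auto simp: insert_commute\<close>)
        qed
      qed
    qed
  qed
qed


lemma starB:
  assumes F: "F2_free E" and g: "grph V E"
    and tri: "\<forall>a b. {a,b} \<in> E \<longrightarrow> (\<exists>c. {a,c} \<in> E \<and> {b,c} \<in> E)"
    and e: "{v,c'} \<in> E" "{v,l} \<in> E" "{c',l} \<in> E" "{v,z0} \<in> E" "{z0,c'} \<in> E" "{z0,l} \<notin> E"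
    and z0: "z0 \<noteq> c'" "z0 \<noteq> l"
    and dz: "card (nb E z0) \<ge> 3"
  shows False
proof -
  have d: "v \<noteq> c'" "v \<noteq> l" "c' \<noteq> l" "v \<noteq> z0" using grph_edge[OF g] e by blast+
  have leaf: "y = c'" if "{v,y} \<in> E" "{z0,y} \<in> E" for y
  proof (rule ccontr)
    assume yc: "y \<noteq> c'"
    have "y \<noteq> l" using that e by auto
    moreover have "y \<noteq> v" "y \<noteq> z0" using grph_edge[OF g] that by blast+
    ultimately show False
      by (intro F2_freeD[OF F, of v z0 y c' l]) (use e that yc d z0 in \<open>auto simp: insert_commute\<close>)
  qed
  have "card (nb E z0 - {v, c'}) \<ge> 1"
  proof -
    have "card (nb E z0 - {v, c'}) \<ge> card (nb E z0) - card {v, c'}" by (rule diff_card_le_card_Diff) simp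
    moreover have "card {v, c'} \<le> 2" by (simp add: card_insert_le_m1)
    ultimately show ?thesis using dz by linarith
  qed
  then have "nb E z0 - {v, c'} \<noteq> {}" by (metis card.empty not_one_le_zero)
  then obtain r where r: "r \<in> nb E z0" "r \<noteq> v" "r \<noteq> c'" by blast
  have zr: "{z0, r} \<in> E" using r nb_iff by metis
  have rv: "{v, r} \<notin> E" using leaf[of r] zr r by blast
  obtain q where q: "{z0,q} \<in> E" "{r,q} \<in> E" using tri zr by blast
  have qv: "q \<noteq> v" using q rv by (auto simp: insert_commute)
  have dd: "z0 \<noteq> r" "r \<noteq> q" "z0 \<noteq> q" using grph_edge[OF g] zr q by blast+
  show False
  proof (cases "q = c'")
    case False
    show False
      by (intro F2_freeD[OF F, of z0 v c' r q]) (use e zr r q qv d dd z0 False in \<open>auto simp: insert_commute\<close>)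
  next
    case True
    have "r \<noteq> l" using rv e by auto
    then show False
      by (intro F2_freeD[OF F, of c' v l z0 r]) (use e zr r q qv d dd z0 True in \<open>auto simp: insert_commute\<close>)
  qed
qed

lemma card_minus2_ne:
  assumes "finite N" "card N \<ge> 3"
  shows "\<exists>z\<in>N. z \<noteq> x \<and> z \<noteq> y"
proof -
  have "card (N - {x, y}) \<ge> card N - card {x, y}" by (rule diff_card_le_card_Diff) simp
  moreover have "card {x, y} \<le> 2" by (simp add: card_insert_le_m1)
  ultimately have "card (N - {x,y}) \<ge> 1" using assms by linarith
  then have "N - {x, y} \<noteq> {}" by (metis card.empty not_one_le_zero)
  then show ?thesis by blast
qed

lemma ET:
  assumes F: "F2_free E" and g: "grph V E" and cV: "card V = n" and n5: "n \<ge> 5"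
    and deg: "\<forall>v\<in>V. card (nb E v) \<ge> n div 2 + 1"
    and tri: "\<forall>a b. {a,b} \<in> E \<longrightarrow> (\<exists>c. {a,c} \<in> E \<and> {b,c} \<in> E)"
    and vV: "v \<in> V"
  shows False
proof -
  have deg3: "card (nb E u) \<ge> 3" if "u \<in> V" for u using deg that n5 by fastforce
  have finN: "finite (nb E v)" using nb_fin[OF g] .
  obtain x where x: "x \<in> nb E v" using deg3[OF vV] by fastforce
  have vx: "{v,x} \<in> E" using x nb_iff by metis
  then obtain c where c: "{v,c} \<in> E" "{x,c} \<in> E" using tri by blast
  have dvx: "v \<noteq> x" "v \<noteq> c" "x \<noteq> c" using grph_edge[OF g] vx c by blast+
  have claim: "{z,x} \<in> E \<or> {z,c} \<in> E" if z: "{v,z} \<in> E" "z \<noteq> x" "z \<noteq> c" for z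
  proof (rule ccontr)
    assume nz: "\<not> ({z,x} \<in> E \<or> {z,c} \<in> E)"
    obtain q where q: "{v,q} \<in> E" "{z,q} \<in> E" using tri z by blast
    have "q \<noteq> x" "q \<noteq> c" using nz q by (auto simp: insert_commute)
    moreover have "v \<noteq> z" "v \<noteq> q" "z \<noteq> q" using grph_edge[OF g] z q by blast+
    ultimately show False
      by (intro F2_freeD[OF F, of v x c z q]) (use vx c z q dvx in \<open>auto simp: insert_commute\<close>)
  qed
  obtain z0 where z0: "z0 \<in> nb E v" "z0 \<noteq> x" "z0 \<noteq> c"
    using card_minus2_ne[OF finN deg3[OF vV]] by blast
  have vz0: "{v,z0} \<in> E" using z0 nb_iff by metis
  have dz0: "card (nb E z0) \<ge> 3" using deg3 grph_edge[OF g vz0] by blast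
  consider (A) "{z0,x} \<in> E" "{z0,c} \<in> E" | (B1) "{z0,x} \<notin> E" "{z0,c} \<in> E"
    | (B2) "{z0,x} \<in> E" "{z0,c} \<notin> E"
    using claim[OF vz0 z0(2,3)] by blast
  then show False
  proof cases
    case B1
    show False by (rule starB[OF F g tri c(1) vx _ vz0 B1(2) B1(1) z0(3) z0(2) dz0])
      (use c in \<open>auto simp: insert_commute\<close>)
  next
    case B2
    show False by (rule starB[OF F g tri vx c(1) c(2) vz0 B2(1) B2(2) z0(2) z0(3) dz0])
  next
    case A
    have Nsub: "nb E v \<subseteq> {x, c, z0}"
    proof
      fix z assume zN: "z \<in> nb E v"
      show "z \<in> {x, c, z0}"
      proof (rule ccontr)
        assume zn: "z \<notin> {x, c, z0}"
        have vz: "{v,z} \<in> E" using zN nb_iff by metis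
        have dd: "v \<noteq> z" "v \<noteq> z0" using grph_edge[OF g] vz vz0 by blast+
        from claim[OF vz] zn consider "{z,x} \<in> E" | "{z,c} \<in> E" by auto
        then show False
        proof cases
          case 1
          show False by (intro F2_freeD[OF F, of v z x z0 c]) (use vx c vz vz0 A 1 dvx dd zn z0 in \<open>auto simp: insert_commute\<close>)
        next
          case 2
          show False by (intro F2_freeD[OF F, of v z c z0 x]) (use vx c vz vz0 A 2 dvx dd zn z0 in \<open>auto simp: insert_commute\<close>)
        qed
      qed
    qed
    have nx: "nb E x \<subseteq> {v, c, z0}"
      by (rule K4_closed[OF F g tri vx c(1) vz0 c(2) _ _ Nsub]) (use A in \<open>auto simp: insert_commute\<close>)
    have xV: "x \<in> V" using grph_edge[OF g vx] by blast
    have c3: "card {v, c, z0} \<le> 3" by (simp add: card_insert_if)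
    have "card (nb E x) \<le> card {v, c, z0}" using card_mono[OF _ nx] by simp
    then have "card (nb E x) \<le> 3" using c3 by linarith
    then have n5': "n = 5" using deg xV n5 by fastforce
    have nc: "nb E c \<subseteq> {x, v, z0}"
      by (rule K4_closed[of E V x c v z0]) (use F g tri A vz0 vx c nx in \<open>auto simp: insert_commute\<close>)
    have nz: "nb E z0 \<subseteq> {c, x, v}"
      by (rule K4_closed[of E V c z0 x v]) (use F g tri A vz0 vx c nc in \<open>auto simp: insert_commute\<close>)
    have sub4: "{v, x, c, z0} \<subseteq> V" using grph_edge[OF g] vx c vz0 by blast
    have d4: "v \<noteq> z0" "x \<noteq> z0" "c \<noteq> z0" using grph_edge[OF g] vz0 A by blast+
    have c4: "card {v, x, c, z0} = 4" using dvx d4 by auto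
    have finV: "finite V" using g grph_def by blast
    obtain s where s: "s \<in> V" "s \<notin> {v, x, c, z0}"
    proof -
      have "card (V - {v,x,c,z0}) = card V - card {v,x,c,z0}" by (rule card_Diff_subset[OF _ sub4]) simp
      then have "card (V - {v,x,c,z0}) = 1" using c4 cV n5' by simp
      then obtain s where "V - {v,x,c,z0} = {s}" by (rule card_1_singletonE)
      then show ?thesis using that by blast
    qed
    obtain y where y: "y \<in> nb E s" using deg3[OF s(1)] by fastforce
    have sy: "{s,y} \<in> E" using y nb_iff by metis
    have yin: "y \<notin> {v, x, c, z0}"
    proof
      assume "y \<in> {v, x, c, z0}"
      then have "s \<in> nb E v \<or> s \<in> nb E x \<or> s \<in> nb E c \<or> s \<in> nb E z0"
        using sy nb_iff by (auto simp: insert_commute)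
      then show False using Nsub nx nc nz s by auto
    qed
    have "y \<in> V" "y \<noteq> s" using grph_edge[OF g sy] by auto
    then have "{v, x, c, z0, s, y} \<subseteq> V" using sub4 s by auto
    moreover have "card {v, x, c, z0, s, y} = 6" using dvx d4 s yin \<open>y \<noteq> s\<close> by auto
    ultimately have "6 \<le> n" using card_mono[OF finV] cV by metis
    then show False using n5' by simp
  qed
qed


lemma K5: "K 5 = 6" "K 4 = 4" unfolding K_def by simp_all

lemma five_case:
  assumes F: "F2_free E" and g: "grph V E" and cV: "card V = 5"
    and vV: "v \<in> V" and dv: "card (nb E v) \<le> 2"
  shows "card E \<le> 7"
proof (rule ccontr)
  assume "\<not> card E \<le> 7"
  then have c8: "card E \<ge> 8" by simp
  let ?E' = "{e\<in>E. v \<notin> e}"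
  let ?W = "V - {v}"
  have finV: "finite V" using g grph_def by blast
  have cW: "card ?W = 4" using cV vV finV by simp
  have sub: "?E' \<subseteq> {B. B \<subseteq> ?W \<and> card B = 2}" using g unfolding grph_def by blast
  have cP: "card {B. B \<subseteq> ?W \<and> card B = 2} = 6" using n_subsets[of ?W 2] finV cW by (simp add: choose_two)
  have finP: "finite {B. B \<subseteq> ?W \<and> card B = 2}" using finV by simp
  have "card ?E' \<le> 6" using card_mono[OF finP sub] cP by simp
  moreover have "card E = card ?E' + card (nb E v)" by (rule edge_split[OF g])
  ultimately have c6: "card ?E' = 6" and d2: "card (nb E v) = 2" using c8 dv by linarith+
  have allE: "?E' = {B. B \<subseteq> ?W \<and> card B = 2}" using card_subset_eq[OF finP sub] c6 cP by simp
  obtain x y where xy: "nb E v = {x, y}" "x \<noteq> y" using d2 card_2_iff by metis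
  have vx: "{v,x} \<in> E" and vy: "{v,y} \<in> E" using xy nb_iff by (metis insertCI)+
  have xV: "x \<in> V" "y \<in> V" "v \<noteq> x" "v \<noteq> y" using grph_edge[OF g] vx vy by blast+
  have c2: "card (V - {v,x,y}) = 2"
  proof -
    have "card (V - {v,x,y}) = card V - card {v,x,y}" by (rule card_Diff_subset) (use xV vV in auto)
    moreover have "card {v,x,y} = 3" using xV xy by simp
    ultimately show ?thesis using cV by simp
  qed
  then obtain z w where zw: "V - {v,x,y} = {z,w}" "z \<noteq> w" using card_2_iff by metis
  have zz: "z \<in> V" "w \<in> V" "z \<notin> {v,x,y}" "w \<notin> {v,x,y}" using zw by blast+
  have inE: "{a,b} \<in> E" if "a \<in> V" "b \<in> V" "a \<noteq> v" "b \<noteq> v" "a \<noteq> b" for a b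
  proof -
    have "{a,b} \<in> {B. B \<subseteq> ?W \<and> card B = 2}" using that by auto
    then show ?thesis using allE by blast
  qed
  show False
    by (rule F2_freeD[OF F, of x v y z w]) (use vx vy xV xy zz zw(2) inE in \<open>auto simp: insert_commute\<close>)
qed

lemma f2_bound:
  "n \<ge> 5 \<Longrightarrow> grph V E \<Longrightarrow> card V = n \<Longrightarrow> F2_free E \<Longrightarrow> card E \<le> K n + 1"
proof (induction n arbitrary: V E)
  case 0
  then show ?case by simp
next
  case (Suc n)
  note g = Suc.prems(2) and F = Suc.prems(4)
  show ?case
  proof (cases "\<exists>v\<in>V. card (nb E v) \<le> Suc n div 2")
    case True
    then obtain v where v: "v \<in> V" "card (nb E v) \<le> Suc n div 2" by blast
    show ?thesis
    proof (cases "n \<ge> 5")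
      case True
      have "card {e\<in>E. v \<notin> e} \<le> K n + 1"
        apply (rule Suc.IH[OF True del_grph[OF g]])
        using Suc.prems v F2_free_mono[OF F] by auto
      then show ?thesis using edge_split[OF g, of v] v K_Suc[of n] by simp
    next
      case False
      then have "Suc n = 5" using Suc.prems(1) by simp
      then show ?thesis using five_case[OF F g _ v(1)] v(2) K5 Suc.prems(3) by simp
    qed
  next
    case False
    then have deg: "\<forall>v\<in>V. card (nb E v) \<ge> Suc n div 2 + 1" by (auto simp: not_le)
    have tri: "\<forall>a b. {a,b} \<in> E \<longrightarrow> (\<exists>c. {a,c} \<in> E \<and> {b,c} \<in> E)"
    proof (intro allI impI)
      fix a b assume ab: "{a,b} \<in> E"
      then have "a \<in> V" "b \<in> V" using grph_edge[OF g] by auto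
      then have "card (nb E a) \<ge> Suc n div 2 + 1" "card (nb E b) \<ge> Suc n div 2 + 1" using deg by auto
      then have "card (nb E a) + card (nb E b) > Suc n" by linarith
      then obtain c where "c \<in> nb E a" "c \<in> nb E b" using common_nb[OF g Suc.prems(3) ab] by blast
      then show "\<exists>c. {a,c} \<in> E \<and> {b,c} \<in> E" using nb_iff by metis
    qed
    obtain v where "v \<in> V" using Suc.prems(1,3) by (metis card.empty ex_in_conv not_numeral_le_zero)
    then show ?thesis using ET[OF F g Suc.prems(3) Suc.prems(1) deg tri] by blast
  qed
qed


definition P :: "nat set set \<Rightarrow> nat \<Rightarrow> nat \<Rightarrow> (nat \<times> nat) set" where
  "P E a b = {(c,d). distinct [a,b,c,d] \<and> {b,c} \<in> E \<and> {c,d} \<in> E \<and> {d,a} \<in> E}"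

definition M :: "nat \<Rightarrow> nat" where "M n = (n div 2 - 1) * ((n + 1) div 2 - 1)"

lemma prod_le_M:
  assumes "x + y + 2 \<le> n" shows "x * y \<le> M n"
proof -
  define p where "p = n div 2 - 1"
  define q where "q = (n + 1) div 2 - 1"
  have pq: "p + q + 2 = n \<or> n < 2" "p \<le> q" "q \<le> p + 1" unfolding p_def q_def by auto
  have s: "x + y \<le> p + q" using assms pq(1) by auto
  have main: "x * y \<le> p * q" if xy: "x \<le> y" "x + y \<le> p + q" for x y
  proof (cases "x \<le> p")
    case True
    have "x * y \<le> x * (p + q - x)" by (rule mult_le_mono2) (use xy in linarith)
    also have "x * (p + q - x) \<le> p * q"
    proof -
      obtain i j where "p = x + i" "q = x + j" using True pq(2) le_Suc_ex le_trans by metis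
      then show ?thesis by (simp add: algebra_simps)
    qed
    finally show ?thesis .
  next
    case False
    then have "x + y \<ge> 2 * p + 2" using xy by linarith
    then show ?thesis using xy pq by linarith
  qed
  have "x * y \<le> p * q"
  proof (cases "x \<le> y")
    case True then show ?thesis using main s by blast
  next
    case False then show ?thesis using main[of y x] s by (simp add: mult.commute)
  qed
  then show ?thesis unfolding M_def p_def q_def .
qed

context
  fixes V E a b n
  assumes g: "grph V E" and F: "F2_free E" and ab: "{a,b} \<in> E" and cV: "card V = n"
begin

definition "Cm = nb E a \<inter> nb E b"
definition "Aa = nb E a - {b} - Cm"
definition "Bb = nb E b - {a} - Cm"

lemma basics:
  "a \<noteq> b" "a \<notin> nb E a" "b \<notin> nb E b" "b \<in> nb E a" "a \<in> nb E b"
  "finite (nb E a)" "finite (nb E b)"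
  using grph_edge[OF g ab] nb_not[OF g] nb_fin[OF g] ab nb_iff by (auto simp: insert_commute)

lemma fins: "finite Cm" "finite Aa" "finite Bb"
  unfolding Cm_def Aa_def Bb_def using basics by auto

lemma sizes: "card Aa + card Bb + card Cm + 2 \<le> n"
proof -
  have dis: "{a,b} \<inter> Cm = {}" "({a,b} \<union> Cm) \<inter> Aa = {}" "({a,b} \<union> Cm \<union> Aa) \<inter> Bb = {}"
    unfolding Cm_def Aa_def Bb_def using basics by auto
  have sub: "{a,b} \<union> Cm \<union> Aa \<union> Bb \<subseteq> V"
    unfolding Cm_def Aa_def Bb_def using nb_sub[OF g] grph_edge[OF g ab] by blast
  have finV: "finite V" using g grph_def by blast
  have "card ({a,b} \<union> Cm \<union> Aa \<union> Bb) = 2 + card Cm + card Aa + card Bb"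
    using dis fins basics by (simp add: card_Un_disjoint)
  moreover have "card ({a,b} \<union> Cm \<union> Aa \<union> Bb) \<le> n" using card_mono[OF finV sub] cV by simp
  ultimately show ?thesis by simp
qed

lemma nba: "nb E a = {b} \<union> Cm \<union> Aa" and nbb: "nb E b = {a} \<union> Cm \<union> Bb"
  unfolding Cm_def Aa_def Bb_def using basics by auto

lemma deg_a: "card (nb E a) = 1 + card Cm + card Aa"
proof -
  have "{b} \<inter> Cm = {}" "({b} \<union> Cm) \<inter> Aa = {}" unfolding Cm_def Aa_def using basics by auto
  then show ?thesis unfolding nba using fins by (simp add: card_Un_disjoint)
qed

lemma deg_b: "card (nb E b) = 1 + card Cm + card Bb"
proof -
  have "{a} \<inter> Cm = {}" "({a} \<union> Cm) \<inter> Bb = {}" unfolding Cm_def Bb_def using basics by auto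
  then show ?thesis unfolding nbb using fins by (simp add: card_Un_disjoint)
qed

lemma P_sub: "P E a b \<subseteq> (Cm \<union> Bb) \<times> (Cm \<union> Aa)"
  unfolding P_def Cm_def Aa_def Bb_def using nb_iff by (auto simp: insert_commute)

lemma P_fin: "finite (P E a b)"
  using P_sub fins by (meson finite_SigmaI finite_Un finite_subset)

lemma P_edge: "(c,d) \<in> P E a b \<Longrightarrow> {c,d} \<in> E \<and> c \<noteq> d"
  unfolding P_def by auto

lemma inC: "x \<in> Cm \<Longrightarrow> {a,x} \<in> E \<and> {b,x} \<in> E \<and> x \<noteq> a \<and> x \<noteq> b"
  unfolding Cm_def using nb_iff basics by blast
lemma inA: "x \<in> Aa \<Longrightarrow> {a,x} \<in> E \<and> x \<notin> Cm \<and> x \<noteq> a \<and> x \<noteq> b \<and> x \<notin> Bb"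
  unfolding Aa_def Bb_def Cm_def using nb_iff basics by blast
lemma inB: "x \<in> Bb \<Longrightarrow> {b,x} \<in> E \<and> x \<notin> Cm \<and> x \<noteq> a \<and> x \<noteq> b \<and> x \<notin> Aa"
  unfolding Aa_def Bb_def Cm_def using nb_iff basics by blast

lemma exA: assumes "c \<in> Cm" "d \<in> Aa" "w \<in> Cm" "w \<noteq> c" "{c,d} \<in> E" shows False
proof -
  have cd: "c \<noteq> d" using grph_edge[OF g assms(5)] by blast
  have 1: "{a,c} \<in> E \<and> {b,c} \<in> E \<and> c \<noteq> a \<and> c \<noteq> b" by (rule inC[OF assms(1)])
  have 2: "{a,d} \<in> E \<and> d \<notin> Cm \<and> d \<noteq> a \<and> d \<noteq> b \<and> d \<notin> Bb" by (rule inA[OF assms(2)])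
  have 3: "{a,w} \<in> E \<and> {b,w} \<in> E \<and> w \<noteq> a \<and> w \<noteq> b" by (rule inC[OF assms(3)])
  have "distinct [a,c,d,b,w]" using 1 2 3 cd assms(3,4) basics(1) by auto
  then show False using F2_freeD[OF F, of a c d b w] 1 2 3 assms(5) ab by blast
qed

lemma exB: assumes "c \<in> Bb" "d \<in> Cm" "w \<in> Cm" "w \<noteq> d" "{c,d} \<in> E" shows False
proof -
  have cd: "c \<noteq> d" using grph_edge[OF g assms(5)] by blast
  have 1: "{b,c} \<in> E \<and> c \<notin> Cm \<and> c \<noteq> a \<and> c \<noteq> b \<and> c \<notin> Aa" by (rule inB[OF assms(1)])
  have 2: "{a,d} \<in> E \<and> {b,d} \<in> E \<and> d \<noteq> a \<and> d \<noteq> b" by (rule inC[OF assms(2)])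
  have 3: "{a,w} \<in> E \<and> {b,w} \<in> E \<and> w \<noteq> a \<and> w \<noteq> b" by (rule inC[OF assms(3)])
  have e: "{d,c} \<in> E" "{b,a} \<in> E" using assms(5) ab by (simp_all add: insert_commute)
  have "distinct [b,d,c,a,w]" using 1 2 3 cd assms(3,4) basics(1) by auto
  then show False using F2_freeD[OF F, of b d c a w] 1 2 3 e by blast
qed

lemma exC: assumes "c \<in> Cm" "d \<in> Cm" "w \<in> Cm" "w \<noteq> c" "w \<noteq> d" "{c,d} \<in> E" shows False
proof -
  have cd: "c \<noteq> d" using grph_edge[OF g assms(6)] by blast
  have 1: "{a,c} \<in> E \<and> {b,c} \<in> E \<and> c \<noteq> a \<and> c \<noteq> b" by (rule inC[OF assms(1)])
  have 2: "{a,d} \<in> E \<and> {b,d} \<in> E \<and> d \<noteq> a \<and> d \<noteq> b" by (rule inC[OF assms(2)])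
  have 3: "{a,w} \<in> E \<and> {b,w} \<in> E \<and> w \<noteq> a \<and> w \<noteq> b" by (rule inC[OF assms(3)])
  have "distinct [a,c,d,b,w]" using 1 2 3 cd assms(4,5) basics(1) by auto
  then show False using F2_freeD[OF F, of a c d b w] 1 2 3 assms(6) ab by blast
qed

lemma exD: assumes "Cm = {w}" "d \<in> Aa" "c \<in> Bb" "{w,d} \<in> E" "{c,w} \<in> E" shows False
proof -
  have w: "w \<in> Cm" using assms by simp
  have 1: "{a,w} \<in> E \<and> {b,w} \<in> E \<and> w \<noteq> a \<and> w \<noteq> b" by (rule inC[OF w])
  have 2: "{a,d} \<in> E \<and> d \<notin> Cm \<and> d \<noteq> a \<and> d \<noteq> b \<and> d \<notin> Bb" by (rule inA[OF assms(2)])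
  have 3: "{b,c} \<in> E \<and> c \<notin> Cm \<and> c \<noteq> a \<and> c \<noteq> b \<and> c \<notin> Aa" by (rule inB[OF assms(3)])
  have e: "{w,a} \<in> E" "{w,b} \<in> E" "{w,c} \<in> E" using 1 assms(5) by (simp_all add: insert_commute)
  have "w \<noteq> d" "w \<noteq> c" "d \<noteq> c" using 2 3 w assms(2,3) by auto
  then have "distinct [w,a,d,b,c]" using 1 2 3 basics(1) by auto
  then show False using F2_freeD[OF F, of w a d b c] 1 2 3 e assms(4) ab by blast
qed

lemma U_card: "card ({a,b} \<union> Cm \<union> Aa \<union> Bb) = 2 + card Cm + card Aa + card Bb"
  and U_sub: "{a,b} \<union> Cm \<union> Aa \<union> Bb \<subseteq> V"
proof -
  have dis: "{a,b} \<inter> Cm = {}" "({a,b} \<union> Cm) \<inter> Aa = {}" "({a,b} \<union> Cm \<union> Aa) \<inter> Bb = {}"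
    unfolding Cm_def Aa_def Bb_def using basics by auto
  show "{a,b} \<union> Cm \<union> Aa \<union> Bb \<subseteq> V"
    unfolding Cm_def Aa_def Bb_def using nb_sub[OF g] grph_edge[OF g ab] by blast
  show "card ({a,b} \<union> Cm \<union> Aa \<union> Bb) = 2 + card Cm + card Aa + card Bb"
    using dis fins basics by (simp add: card_Un_disjoint)
qed

lemma P_sub3: assumes "card Cm \<ge> 3" shows "P E a b \<subseteq> Bb \<times> Aa"
proof
  fix z assume z: "z \<in> P E a b"
  obtain c d where zcd: "z = (c,d)" by (cases z)
  have cd: "c \<in> Cm \<union> Bb" "d \<in> Cm \<union> Aa" using P_sub z zcd by auto
  have e: "{c,d} \<in> E" "c \<noteq> d" using P_edge z zcd by auto
  have c: "c \<in> Bb"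
  proof (rule ccontr)
    assume "c \<notin> Bb"
    then have cC: "c \<in> Cm" using cd by blast
    show False
    proof (cases "d \<in> Cm")
      case True
      obtain w where "w \<in> Cm" "w \<noteq> c" "w \<noteq> d" using card_minus2_ne[OF fins(1) assms] by blast
      then show False using exC[OF cC True] e by blast
    next
      case False
      then have "d \<in> Aa" using cd by blast
      obtain w where "w \<in> Cm" "w \<noteq> c" "w \<noteq> d" using card_minus2_ne[OF fins(1) assms] by blast
      then show False using exA[OF cC \<open>d \<in> Aa\<close>] e by blast
    qed
  qed
  have "d \<in> Aa"
  proof (rule ccontr)
    assume "d \<notin> Aa"
    then have dC: "d \<in> Cm" using cd by blast
    obtain w where "w \<in> Cm" "w \<noteq> c" "w \<noteq> d" using card_minus2_ne[OF fins(1) assms] by blast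
    then show False using exB[OF c dC] e by blast
  qed
  then show "z \<in> Bb \<times> Aa" using c zcd by simp
qed

lemma card_le_two: "card {x, y} \<le> 2"
  by (cases "x = y") auto

lemma P_le_M: assumes n6: "n \<ge> 6" shows "card (P E a b) \<le> M n"
proof -
  have sz: "card Aa + card Bb + card Cm + 2 \<le> n" by (rule sizes)
  consider (z) "card Cm = 0" | (one) "card Cm = 1" | (t) "card Cm = 2" | (b) "card Cm \<ge> 3" by linarith
  then show ?thesis
  proof cases
    case b
    have "card (P E a b) \<le> card (Bb \<times> Aa)" by (rule card_mono) (use P_sub3[OF b] fins in auto)
    also have "\<dots> = card Bb * card Aa" by (simp add: card_cartesian_product)
    also have "\<dots> \<le> M n" by (rule prod_le_M) (use sz in linarith)
    finally show ?thesis .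
  next
    case z
    then have "Cm = {}" using fins by simp
    then have "P E a b \<subseteq> Bb \<times> Aa" using P_sub by auto
    then have "card (P E a b) \<le> card (Bb \<times> Aa)" by (rule card_mono[rotated]) (use fins in auto)
    also have "\<dots> = card Bb * card Aa" by (simp add: card_cartesian_product)
    also have "\<dots> \<le> M n" by (rule prod_le_M) (use sz in linarith)
    finally show ?thesis .
  next
    case one
    then obtain w where w: "Cm = {w}" by (rule card_1_singletonE)
    have wA: "w \<notin> Aa" "w \<notin> Bb" using w inA inB by blast+
    have "P E a b \<subseteq> (insert w Bb) \<times> Aa \<or> P E a b \<subseteq> Bb \<times> (insert w Aa)"
    proof (rule ccontr)
      assume "\<not> ?thesis"
      then obtain c d c' d' where p1: "(c,d) \<in> P E a b" "(c,d) \<notin> (insert w Bb) \<times> Aa"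
        and p2: "(c',d') \<in> P E a b" "(c',d') \<notin> Bb \<times> (insert w Aa)" by auto
      have hA: "c \<in> insert w Bb" "d \<in> insert w Aa" "{c,d} \<in> E" "c \<noteq> d"
        using P_sub P_edge p1(1) w by auto
      have hB: "c' \<in> insert w Bb" "d' \<in> insert w Aa" "{c',d'} \<in> E" "c' \<noteq> d'"
        using P_sub P_edge p2(1) w by auto
      have "d = w" using p1 hA by auto
      then have "c \<in> Bb" using hA by auto
      have "c' = w" using p2 hB by auto
      then have "d' \<in> Aa" using hB by auto
      show False using exD[OF w \<open>d' \<in> Aa\<close> \<open>c \<in> Bb\<close>] hA(3) hB(3) \<open>d = w\<close> \<open>c' = w\<close> by simp
    qed
    then show ?thesis
    proof
      assume s: "P E a b \<subseteq> (insert w Bb) \<times> Aa"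
      have "card (P E a b) \<le> card ((insert w Bb) \<times> Aa)" by (rule card_mono[OF _ s]) (use fins in auto)
      also have "\<dots> = (card Bb + 1) * card Aa" using wA fins by (simp add: card_cartesian_product)
      also have "\<dots> \<le> M n" by (rule prod_le_M) (use sz one in linarith)
      finally show ?thesis .
    next
      assume s: "P E a b \<subseteq> Bb \<times> (insert w Aa)"
      have "card (P E a b) \<le> card (Bb \<times> (insert w Aa))" by (rule card_mono[OF _ s]) (use fins in auto)
      also have "\<dots> = card Bb * (card Aa + 1)" using wA fins by (simp add: card_cartesian_product)
      also have "\<dots> \<le> M n" by (rule prod_le_M) (use sz one in linarith)
      finally show ?thesis .
    qed
  next
    case t
    then obtain w1 w2 where w: "Cm = {w1, w2}" "w1 \<noteq> w2" using card_2_iff by metis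
    have s: "P E a b \<subseteq> Bb \<times> Aa \<union> {(w1,w2),(w2,w1)}"
    proof
      fix z assume z: "z \<in> P E a b"
      obtain c d where zcd: "z = (c,d)" by (cases z)
      have cd: "c \<in> Cm \<union> Bb" "d \<in> Cm \<union> Aa" using P_sub z zcd by auto
      have e: "{c,d} \<in> E" "c \<noteq> d" using P_edge z zcd by auto
      show "z \<in> Bb \<times> Aa \<union> {(w1,w2),(w2,w1)}"
      proof (cases "c \<in> Cm")
        case cC: True
        show ?thesis
        proof (cases "d \<in> Cm")
          case True then show ?thesis using cC e zcd w by auto
        next
          case False
          then have dA: "d \<in> Aa" using cd by blast
          obtain w' where "w' \<in> Cm" "w' \<noteq> c" using w cC by blast
          then show ?thesis using exA[OF cC dA] e by blast
        qed
      next
        case False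
        then have cB: "c \<in> Bb" using cd by blast
        show ?thesis
        proof (cases "d \<in> Cm")
          case dC: True
          obtain w' where "w' \<in> Cm" "w' \<noteq> d" using w dC by blast
          then show ?thesis using exB[OF cB dC] e by blast
        next
          case False
          then show ?thesis using cB cd zcd by blast
        qed
      qed
    qed
    have "card (P E a b) \<le> card (Bb \<times> Aa \<union> {(w1,w2),(w2,w1)})" by (rule card_mono[OF _ s]) (use fins in auto)
    also have "\<dots> \<le> card (Bb \<times> Aa) + card {(w1,w2),(w2,w1)}" by (rule card_Un_le)
    also have "\<dots> \<le> card Bb * card Aa + 2"
    proof -
      have "card {(w1,w2),(w2,w1)} \<le> 2" by (rule card_le_two) 
      then show ?thesis by (simp add: card_cartesian_product)
    qed
    finally have cP: "card (P E a b) \<le> card Bb * card Aa + 2" .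
    show ?thesis
    proof (cases "card Aa + card Bb = 0")
      case True
      have "2 * 2 \<le> M n" by (rule prod_le_M) (use n6 in linarith)
      then show ?thesis using cP True by simp
    next
      case False
      have "(card Bb + 1) * (card Aa + 1) \<le> M n" by (rule prod_le_M) (use sz t in linarith)
      moreover have "(card Bb + 1) * (card Aa + 1) = card Bb * card Aa + card Bb + card Aa + 1" by (simp add: algebra_simps)
      moreover have "card Bb * card Aa + 2 \<le> card Bb * card Aa + card Bb + card Aa + 1" using False by linarith
      ultimately show ?thesis using cP by linarith
    qed
  qed
qed


lemma spine:
  assumes deg: "\<forall>v\<in>V. n div 2 \<le> card (nb E v)" and t3: "card Cm \<ge> 3"
  shows "card (P E a b) \<le> 4"
proof -
  define R where "R = V - ({a,b} \<union> Cm \<union> Aa \<union> Bb)"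
  have finV: "finite V" using g grph_def by blast
  have cR: "card R = n - (2 + card Cm + card Aa + card Bb)"
  proof -
    have "finite ({a,b} \<union> Cm \<union> Aa \<union> Bb)" using fins by simp
    then have "card R = card V - card ({a,b} \<union> Cm \<union> Aa \<union> Bb)" unfolding R_def by (rule card_Diff_subset[OF _ U_sub])
    then show ?thesis using U_card cV by simp
  qed
  have sz: "card Aa + card Bb + card Cm + 2 \<le> n" by (rule sizes)
  obtain w where wC: "w \<in> Cm" using t3 by fastforce
  have wV: "w \<in> V" using wC U_sub by blast
  have nw: "nb E w \<subseteq> {a,b} \<union> R"
  proof
    fix x assume x: "x \<in> nb E w"
    have wx: "{w,x} \<in> E" using x nb_iff by metis
    have xV: "x \<in> V" "x \<noteq> w" using grph_edge[OF g wx] by auto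
    have "x \<notin> Cm"
    proof
      assume xC: "x \<in> Cm"
      obtain w' where "w' \<in> Cm" "w' \<noteq> w" "w' \<noteq> x" using card_minus2_ne[OF fins(1) t3] by blast
      then show False using exC[OF wC xC] wx by blast
    qed
    moreover have "x \<notin> Aa"
    proof
      assume xA: "x \<in> Aa"
      obtain w' where "w' \<in> Cm" "w' \<noteq> w" using card_minus2_ne[OF fins(1) t3] by blast
      then show False using exA[OF wC xA] wx by blast
    qed
    moreover have "x \<notin> Bb"
    proof
      assume xB: "x \<in> Bb"
      obtain w' where "w' \<in> Cm" "w' \<noteq> w" using card_minus2_ne[OF fins(1) t3] by blast
      then show False using exB[OF xB wC] wx by (auto simp: insert_commute)
    qed
    ultimately show "x \<in> {a,b} \<union> R" unfolding R_def using xV by blast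
  qed
  have finR: "finite R" unfolding R_def using finV by simp
  have "card (nb E w) \<le> card ({a,b} \<union> R)" by (rule card_mono[OF _ nw]) (use finR in simp)
  also have "\<dots> \<le> 2 + card R"
  proof -
    have "card {a,b} \<le> 2" by (simp add: card_insert_if)
    then show ?thesis using card_Un_le[of "{a,b}" R] by linarith
  qed
  finally have dw: "card (nb E w) \<le> 2 + card R" .
  have aV: "a \<in> V" "b \<in> V" using grph_edge[OF g ab] by auto
  have "n div 2 \<le> 1 + card Cm + card Aa" using deg aV deg_a by metis
  moreover have "n div 2 \<le> 1 + card Cm + card Bb" using deg aV deg_b by metis
  moreover have "n div 2 \<le> 2 + card R" using deg wV dw by fastforce
  moreover have "n \<le> 2 * (n div 2) + 1" by linarith
  ultimately have "card Aa \<le> 2" "card Bb \<le> 2" using cR sz by linarith+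
  then have "card Bb * card Aa \<le> 2 * 2" by (intro mult_le_mono) auto
  moreover have "card (P E a b) \<le> card (Bb \<times> Aa)" by (rule card_mono) (use P_sub3[OF t3] fins in auto)
  ultimately show ?thesis by (simp add: card_cartesian_product)
qed

end


lemma fiber_ge:
  assumes "finite A" "\<forall>y\<in>f ` A. k \<le> card {x\<in>A. f x = y}"
  shows "k * card (f ` A) \<le> card A"
proof -
  have A: "A = (\<Union>y\<in>f ` A. {x\<in>A. f x = y})" by auto
  have "card A = (\<Sum>y\<in>f ` A. card {x\<in>A. f x = y})"
    by (subst A, rule card_UN_disjoint) (use assms(1) in auto)
  moreover have "(\<Sum>y\<in>f ` A. k) \<le> (\<Sum>y\<in>f ` A. card {x\<in>A. f x = y})"
    by (rule sum_mono) (use assms(2) in auto)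
  ultimately show ?thesis by (simp add: mult.commute)
qed

lemma fiber_eq:
  assumes "finite A" "\<forall>y\<in>f ` A. card {x\<in>A. f x = y} = k"
  shows "card A = k * card (f ` A)"
proof -
  have A: "A = (\<Union>y\<in>f ` A. {x\<in>A. f x = y})" by auto
  have "card A = (\<Sum>y\<in>f ` A. card {x\<in>A. f x = y})"
    by (subst A, rule card_UN_disjoint) (use assms(1) in auto)
  then show ?thesis using assms(2) by simp
qed

definition D :: "nat set set \<Rightarrow> (nat \<times> nat) set" where "D E = {(a,b). {a,b} \<in> E}"

lemma D_fin: "grph V E \<Longrightarrow> finite (D E)"
proof -
  assume g: "grph V E"
  have "D E \<subseteq> V \<times> V" unfolding D_def using grph_edge[OF g] by auto
  moreover have "finite V" using g grph_def by blast
  ultimately show ?thesis using finite_subset by blast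
qed

lemma D_card: assumes g: "grph V E" shows "card (D E) = 2 * card E"
proof -
  let ?f = "\<lambda>(a,b). {a,b::nat}"
  have img: "?f ` D E = E"
  proof
    show "?f ` D E \<subseteq> E" unfolding D_def by auto
    show "E \<subseteq> ?f ` D E"
    proof
      fix e assume e: "e \<in> E"
      then obtain x y where "e = {x,y}" using g grph_def card_2_iff by metis
      then show "e \<in> ?f ` D E" unfolding D_def using e by (auto intro!: image_eqI[where x="(x,y)"])
    qed
  qed
  have "card (D E) = 2 * card (?f ` D E)"
  proof (rule fiber_eq[OF D_fin[OF g]], rule ballI)
    fix e assume "e \<in> ?f ` D E"
    then obtain x y where xy: "(x,y) \<in> D E" "e = {x,y}" by auto
    have xyE: "{x,y} \<in> E" using xy(1) unfolding D_def by simp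
    have ne: "x \<noteq> y" using grph_edge[OF g xyE] by blast
    have "{z\<in>D E. ?f z = e} \<subseteq> {(x,y),(y,x)}"
    proof
      fix z assume "z \<in> {z\<in>D E. ?f z = e}"
      then obtain p q where "z = (p,q)" "{p,q} = {x,y}" using xy(2) by (cases z) auto
      then show "z \<in> {(x,y),(y,x)}" by (auto simp: doubleton_eq_iff)
    qed
    moreover have "{(x,y),(y,x)} \<subseteq> {z\<in>D E. ?f z = e}"
    proof -
      have "{y,x} \<in> E" using xyE by (simp add: insert_commute)
      then show ?thesis using xyE xy(2) unfolding D_def by (auto simp: insert_commute)
    qed
    ultimately have "{z\<in>D E. ?f z = e} = {(x,y),(y,x)}" by blast
    then show "card {z\<in>D E. ?f z = e} = 2" using ne by simp
  qed
  then show ?thesis using img by simp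
qed

definition Q :: "nat set set \<Rightarrow> ((nat \<times> nat) \<times> (nat \<times> nat)) set" where
  "Q E = {((a,b),(c,d)). distinct [a,b,c,d] \<and> {a,b} \<in> E \<and> {b,c} \<in> E \<and> {c,d} \<in> E \<and> {d,a} \<in> E}"

lemma Q_Sigma: "Q E = Sigma (D E) (\<lambda>(a,b). P E a b)"
  unfolding Q_def D_def P_def by auto

definition cyc :: "(nat \<times> nat) \<times> (nat \<times> nat) \<Rightarrow> nat set set" where
  "cyc t = (case t of ((a,b),(c,d)) \<Rightarrow> {{a,b},{b,c},{c,d},{d,a}})"

lemma cyc_rot: "cyc ((b,c),(d,a)) = cyc ((a,b),(c,d))" "cyc ((a,d),(c,b)) = cyc ((a,b),(c,d))"
  unfolding cyc_def by (auto simp: insert_commute)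
lemma Q_rot: "((a,b),(c,d)) \<in> Q E \<Longrightarrow> ((b,c),(d,a)) \<in> Q E" "((a,b),(c,d)) \<in> Q E \<Longrightarrow> ((a,d),(c,b)) \<in> Q E"
  unfolding Q_def by (auto simp: insert_commute)

lemma Q_fin: "grph V E \<Longrightarrow> finite (Q E)"
proof -
  assume g: "grph V E"
  have "Q E \<subseteq> (V \<times> V) \<times> (V \<times> V)" unfolding Q_def using grph_edge[OF g] by auto
  moreover have "finite V" using g grph_def by blast
  ultimately show ?thesis using finite_subset by blast
qed

lemma cyc_img: "cyc ` Q E = {S. S \<subseteq> E \<and> is_C4 S}"
proof
  show "cyc ` Q E \<subseteq> {S. S \<subseteq> E \<and> is_C4 S}"
    unfolding Q_def cyc_def is_C4_def by auto
  show "{S. S \<subseteq> E \<and> is_C4 S} \<subseteq> cyc ` Q E"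
  proof
    fix S assume "S \<in> {S. S \<subseteq> E \<and> is_C4 S}"
    then obtain a b c d where S: "S \<subseteq> E" "distinct [a,b,c,d]" "S = {{a,b},{b,c},{c,d},{d,a}}"
      unfolding is_C4_def by auto
    then have "((a,b),(c,d)) \<in> Q E" unfolding Q_def by auto
    moreover have "cyc ((a,b),(c,d)) = S" unfolding cyc_def using S by simp
    ultimately show "S \<in> cyc ` Q E" by force
  qed
qed

lemma eight:
  assumes g: "grph V E"
  shows "8 * num_C4 E \<le> card (Q E)"
proof -
  have "8 * card (cyc ` Q E) \<le> card (Q E)"
  proof (rule fiber_ge[OF Q_fin[OF g]], rule ballI)
    fix S assume "S \<in> cyc ` Q E"
    then obtain a b c d where t: "((a,b),(c,d)) \<in> Q E" "S = cyc ((a,b),(c,d))" by auto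
    have dist: "distinct [a,b,c,d]" using t unfolding Q_def by auto
    let ?T = "{((a,b),(c,d)), ((b,c),(d,a)), ((c,d),(a,b)), ((d,a),(b,c)),
               ((a,d),(c,b)), ((d,c),(b,a)), ((c,b),(a,d)), ((b,a),(d,c))}"
    note q1 = Q_rot(1)[OF t(1)]
    note q2 = Q_rot(1)[OF q1]
    note q3 = Q_rot(1)[OF q2]
    note r0 = Q_rot(2)[OF t(1)]
    note r1 = Q_rot(1)[OF r0]
    note r2 = Q_rot(1)[OF r1]
    note r3 = Q_rot(1)[OF r2]
    have c1: "cyc ((b,c),(d,a)) = S" using t(2) cyc_rot(1)[of b c d a] by simp
    have c2: "cyc ((c,d),(a,b)) = S" using c1 cyc_rot(1)[of c d a b] by simp
    have c3: "cyc ((d,a),(b,c)) = S" using c2 cyc_rot(1)[of d a b c] by simp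
    have d0: "cyc ((a,d),(c,b)) = S" using t(2) cyc_rot(2)[of a d c b] by simp
    have d1: "cyc ((d,c),(b,a)) = S" using d0 cyc_rot(1)[of d c b a] by simp
    have d2: "cyc ((c,b),(a,d)) = S" using d1 cyc_rot(1)[of c b a d] by simp
    have d3: "cyc ((b,a),(d,c)) = S" using d2 cyc_rot(1)[of b a d c] by simp
    note q = q1 q2 q3 r0 r1 r2 r3 and cy = c1 c2 c3 d0 d1 d2 d3
    have sub: "?T \<subseteq> {x\<in>Q E. cyc x = S}"
      using t q cy by auto
    have c8: "card ?T = 8" using dist by auto
    have fin: "finite {x\<in>Q E. cyc x = S}" using Q_fin[OF g] by simp
    show "8 \<le> card {x\<in>Q E. cyc x = S}" using card_mono[OF fin sub] c8 by simp
  qed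
  then show ?thesis unfolding num_C4_def cyc_img .
qed

lemma Q_card: assumes g: "grph V E" shows "card (Q E) = (\<Sum>x\<in>D E. card (P E (fst x) (snd x)))"
proof -
  have "Q E = Sigma (D E) (\<lambda>x. P E (fst x) (snd x))" unfolding Q_Sigma by (auto simp: split_beta)
  moreover have "\<forall>x\<in>D E. finite (P E (fst x) (snd x))"
  proof
    fix x assume "x \<in> D E"
    have "P E (fst x) (snd x) \<subseteq> V \<times> V" unfolding P_def using grph_edge[OF g] by auto
    moreover have "finite V" using g grph_def by blast
    ultimately show "finite (P E (fst x) (snd x))" using finite_subset by blast
  qed
  ultimately show ?thesis using D_fin[OF g] by simp
qed


definition Eb :: "nat \<Rightarrow> nat set set" where
  "Eb n = {{i,j} | i j. i < n div 2 \<and> n div 2 \<le> j \<and> j < n}"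

lemma Eb_cross: "{p,q} \<in> Eb n \<Longrightarrow> (p < n div 2) \<noteq> (q < n div 2)"
  unfolding Eb_def by (auto simp: doubleton_eq_iff)

lemma Eb_graph: "e \<in> Eb n \<Longrightarrow> e \<subseteq> {..<n} \<and> card e = 2"
  unfolding Eb_def by auto

lemma tri_01:
  assumes n4: "n \<ge> 4" and e: "{x,y} \<in> insert {0,1} (Eb n)" "{x,z} \<in> insert {0,1} (Eb n)" "{y,z} \<in> insert {0,1} (Eb n)"
  shows "{0,1} \<subseteq> {x,y,z}"
proof (rule ccontr)
  assume ns: "\<not> ?thesis"
  have 1: "{x,y} \<in> Eb n"
  proof (rule ccontr)
    assume "{x,y} \<notin> Eb n"
    then have "{x,y} = {0,1}" using e(1) by simp
    then show False using ns by blast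
  qed
  have 2: "{x,z} \<in> Eb n"
  proof (rule ccontr)
    assume "{x,z} \<notin> Eb n"
    then have "{x,z} = {0,1}" using e(2) by simp
    then show False using ns by blast
  qed
  have 3: "{y,z} \<in> Eb n"
  proof (rule ccontr)
    assume "{y,z} \<notin> Eb n"
    then have "{y,z} = {0,1}" using e(3) by simp
    then show False using ns by blast
  qed
  note c1 = Eb_cross[OF 1] and c2 = Eb_cross[OF 2] and c3 = Eb_cross[OF 3]
  show False using c1 c2 c3 by argo
qed

lemma E0_F2: assumes n4: "n \<ge> 4" shows "F2_free (insert {0,1} (Eb n))"
  unfolding F2_free_def
proof (intro notI, elim exE conjE)
  fix a b c d e
  assume h1: "distinct [a, b, c, d, e]" and h2: "{a, b} \<in> insert {0,1} (Eb n)"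
    and h3: "{a, c} \<in> insert {0,1} (Eb n)" and h4: "{b, c} \<in> insert {0,1} (Eb n)"
    and h5: "{a, d} \<in> insert {0,1} (Eb n)" and h6: "{a, e} \<in> insert {0,1} (Eb n)"
    and h7: "{d, e} \<in> insert {0,1} (Eb n)"
  have 1: "{0,1} \<subseteq> {a,b,c}" by (rule tri_01[OF n4 h2 h3 h4])
  have 2: "{0,1} \<subseteq> {a,d,e}" by (rule tri_01[OF n4 h5 h6 h7])
  have "{a,b,c} \<inter> {a,d,e} = {a}" using h1 by auto
  then have "{0,1} \<subseteq> {a}" using 1 2 by blast
  then show False by auto
qed

lemma E0_graph: assumes n4: "n \<ge> 4" shows "is_graph_on n (insert {0,1} (Eb n))"
  unfolding is_graph_on_def using Eb_graph n4 by auto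

lemma E0_diff: assumes n4: "n \<ge> 4" shows "card (insert {0,1} (Eb n) - Eb n) = 1"
proof -
  have "{0,1} \<notin> Eb n" using Eb_cross[of 0 1 n] n4 by auto
  then have "insert {0,1} (Eb n) - Eb n = {{0,1}}" by auto
  then show ?thesis by simp
qed

definition FF :: "nat set \<times> nat set \<Rightarrow> nat set set" where
  "FF XY = {{x,y} | x y. x \<in> fst XY \<and> y \<in> snd XY}"

lemma FF_eq: "{{x,y} | x y. x \<in> {x1,x2::nat} \<and> y \<in> {y1,y2}} = {{x1,y1},{y1,x2},{x2,y2},{y2,x1}}"
proof (rule equalityI)
  show "{{x,y} | x y. x \<in> {x1,x2::nat} \<and> y \<in> {y1,y2}} \<subseteq> {{x1,y1},{y1,x2},{x2,y2},{y2,x1}}"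
    by (auto simp: insert_commute)
  show "{{x1,y1},{y1,x2},{x2,y2},{y2,x1}} \<subseteq> {{x,y} | x y. x \<in> {x1,x2::nat} \<and> y \<in> {y1,y2}}"
    by (auto simp: insert_commute)
qed

lemma Eb_C4:
  assumes n4: "n \<ge> 4"
  shows "(n div 2 choose 2) * ((n + 1) div 2 choose 2) \<le> num_C4 (Eb n)"
proof -
  let ?m = "n div 2"
  let ?PX = "{X. X \<subseteq> {..<?m} \<and> card X = 2}"
  let ?PY = "{Y. Y \<subseteq> {?m..<n} \<and> card Y = 2}"
  have cPX: "card ?PX = ?m choose 2" using n_subsets[of "{..<?m}" 2] by simp
  have cPY: "card ?PY = (n + 1) div 2 choose 2"
  proof -
    have "card {?m..<n} = (n+1) div 2" by simp
    then show ?thesis using n_subsets[of "{?m..<n}" 2] by simp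
  qed
  have img: "FF ` (?PX \<times> ?PY) \<subseteq> {S. S \<subseteq> Eb n \<and> is_C4 S}"
  proof
    fix S assume "S \<in> FF ` (?PX \<times> ?PY)"
    then obtain X Y where XY: "X \<in> ?PX" "Y \<in> ?PY" "S = FF (X,Y)" by auto
    have "card X = 2" "card Y = 2" using XY by auto
    then obtain x1 x2 y1 y2 where X: "X = {x1,x2}" "x1 \<noteq> x2" and Y: "Y = {y1,y2}" "y1 \<noteq> y2"
      unfolding card_2_iff by blast
    have xs: "x1 < ?m" "x2 < ?m" "?m \<le> y1" "y1 < n" "?m \<le> y2" "y2 < n" using XY X Y by auto
    have S: "S = {{x1,y1},{y1,x2},{x2,y2},{y2,x1}}"
      unfolding XY(3) FF_def X Y fst_conv snd_conv by (rule FF_eq)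
    have "S \<subseteq> Eb n" unfolding S Eb_def using xs by blast
    moreover have "distinct [x1,y1,x2,y2]" using xs X Y by auto
    ultimately show "S \<in> {S. S \<subseteq> Eb n \<and> is_C4 S}" unfolding is_C4_def using S by blast
  qed
  have inj: "inj_on FF (?PX \<times> ?PY)"
  proof (rule inj_onI)
    fix p q assume p: "p \<in> ?PX \<times> ?PY" and q: "q \<in> ?PX \<times> ?PY" and eq: "FF p = FF q"
    have rec: "\<Union>(FF r) \<inter> {..<?m} = fst r \<and> \<Union>(FF r) \<inter> {?m..<n} = snd r" if r: "r \<in> ?PX \<times> ?PY" for r
    proof -
      have ne: "fst r \<noteq> {}" "snd r \<noteq> {}" using r by auto
      have s: "fst r \<subseteq> {..<?m}" "snd r \<subseteq> {?m..<n}" using r by auto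
      have U: "\<Union>(FF r) = fst r \<union> snd r"
      proof
        show "\<Union>(FF r) \<subseteq> fst r \<union> snd r" unfolding FF_def by auto
        show "fst r \<union> snd r \<subseteq> \<Union>(FF r)"
        proof
          fix z assume z: "z \<in> fst r \<union> snd r"
          obtain x0 where x0: "x0 \<in> fst r" using ne by blast
          obtain y0 where y0: "y0 \<in> snd r" using ne by blast
          show "z \<in> \<Union>(FF r)"
          proof (cases "z \<in> fst r")
            case True
            then have "{z,y0} \<in> FF r" unfolding FF_def using y0 by blast
            then show ?thesis by blast
          next
            case False
            then have "z \<in> snd r" using z by blast
            then have "{x0,z} \<in> FF r" unfolding FF_def using x0 by blast
            then show ?thesis by blast
          qed
        qed
      qed
      have d: "snd r \<inter> {..<?m} = {}" "fst r \<inter> {?m..<n} = {}" using s by auto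
      show ?thesis unfolding U using s d by blast
    qed
    have "fst p = fst q" "snd p = snd q" using rec[OF p] rec[OF q] eq by auto
    then show "p = q" by (rule prod_eqI)
  qed
  have finE: "finite (Eb n)"
  proof -
    have "Eb n \<subseteq> Pow {..<n}" using Eb_graph by blast
    then show ?thesis using finite_subset by blast
  qed
  have fin: "finite {S. S \<subseteq> Eb n \<and> is_C4 S}" using finE by simp
  have "card (?PX \<times> ?PY) = card (FF ` (?PX \<times> ?PY))" using card_image[OF inj] by simp
  also have "\<dots> \<le> num_C4 (Eb n)" unfolding num_C4_def by (rule card_mono[OF fin img])
  finally have "card (?PX \<times> ?PY) \<le> num_C4 (Eb n)" .
  moreover have "card (?PX \<times> ?PY) = (?m choose 2) * ((n + 1) div 2 choose 2)"
    by (simp only: card_cartesian_product cPX cPY)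
  ultimately show ?thesis by simp
qed


lemma choose2: "2 * (x choose 2) = x * (x - 1)"
proof -
  have "even (x * (x - 1))" by (cases x) simp_all
  then show ?thesis by (cases "even x") (simp_all add: choose_two)
qed

lemma fourT: "4 * ((n div 2 choose 2) * ((n + 1) div 2 choose 2)) = K n * M n"
proof -
  let ?p = "n div 2" and ?q = "(n + 1) div 2"
  have "4 * ((?p choose 2) * (?q choose 2)) = (2 * (?p choose 2)) * (2 * (?q choose 2))" by simp
  also have "\<dots> = (?p * (?p - 1)) * (?q * (?q - 1))" by (simp only: choose2)
  also have "\<dots> = (?p * ?q) * ((?p - 1) * (?q - 1))" by (simp add: algebra_simps)
  finally show ?thesis unfolding K_def M_def .
qed

lemma M_ge4: "n \<ge> 6 \<Longrightarrow> 4 \<le> M n"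
  using prod_le_M[of 2 2 n] by simp

lemma P_mono: "E1 \<subseteq> E \<Longrightarrow> P E1 a b \<subseteq> P E a b"
  unfolding P_def by auto

lemma P_finV: "grph V E \<Longrightarrow> finite (P E a b)"
proof -
  assume g: "grph V E"
  have "P E a b \<subseteq> V \<times> V" unfolding P_def using grph_edge[OF g] by auto
  moreover have "finite V" using g grph_def by blast
  ultimately show ?thesis using finite_subset by blast
qed

lemma grph_sub: "grph V E \<Longrightarrow> E1 \<subseteq> E \<Longrightarrow> grph V E1"
  unfolding grph_def by blast

lemma sumP_le:
  assumes g: "grph V E" and sub: "E1 \<subseteq> E" and F: "F2_free E" and cV: "card V = n" and n6: "n \<ge> 6"
    and x: "x \<in> D E1"
  shows "card (P E1 (fst x) (snd x)) \<le> M n"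
proof -
  have ab: "{fst x, snd x} \<in> E" using x sub unfolding D_def by auto
  have "card (P E1 (fst x) (snd x)) \<le> card (P E (fst x) (snd x))"
    by (rule card_mono[OF P_finV[OF g] P_mono[OF sub]])
  also have "\<dots> \<le> M n" by (rule P_le_M[OF g F ab cV n6])
  finally show ?thesis .
qed

lemma C4_bound:
  assumes g: "grph V E" and sub: "E1 \<subseteq> E" and F: "F2_free E" and cV: "card V = n" and n6: "n \<ge> 6"
  shows "4 * num_C4 E1 \<le> card E1 * M n"
proof -
  have g1: "grph V E1" by (rule grph_sub[OF g sub])
  have "8 * num_C4 E1 \<le> card (Q E1)" by (rule eight[OF g1])
  also have "\<dots> = (\<Sum>x\<in>D E1. card (P E1 (fst x) (snd x)))" by (rule Q_card[OF g1])
  also have "\<dots> \<le> (\<Sum>x\<in>D E1. M n)" by (rule sum_mono) (rule sumP_le[OF g sub F cV n6])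
  also have "\<dots> = 2 * card E1 * M n" using D_card[OF g1] by simp
  finally show ?thesis by (simp add: mult.commute)
qed

lemma C4_bound_spine:
  assumes g: "grph V E" and sub: "E1 \<subseteq> E" and F: "F2_free E" and cV: "card V = n" and n6: "n \<ge> 6"
    and ab: "{a0,b0} \<in> E1" and s1: "card (P E a0 b0) \<le> 4" and s2: "card (P E b0 a0) \<le> 4"
  shows "4 * num_C4 E1 + M n \<le> card E1 * M n + 4"
proof -
  have g1: "grph V E1" by (rule grph_sub[OF g sub])
  have ne: "a0 \<noteq> b0" using grph_edge[OF g1 ab] by blast
  let ?S = "{(a0,b0),(b0,a0)}"
  let ?f = "\<lambda>x. card (P E1 (fst x) (snd x))"
  have Ssub: "?S \<subseteq> D E1" using ab unfolding D_def by (auto simp: insert_commute)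
  have finD: "finite (D E1)" by (rule D_fin[OF g1])
  have cS: "card ?S = 2" using ne by simp
  have "8 * num_C4 E1 \<le> card (Q E1)" by (rule eight[OF g1])
  also have "\<dots> = (\<Sum>x\<in>D E1. ?f x)" by (rule Q_card[OF g1])
  also have "\<dots> = (\<Sum>x\<in>D E1 - ?S. ?f x) + (\<Sum>x\<in>?S. ?f x)"
    by (rule sum.subset_diff[OF Ssub finD])
  also have "(\<Sum>x\<in>D E1 - ?S. ?f x) \<le> (\<Sum>x\<in>D E1 - ?S. M n)"
    by (rule sum_mono) (rule sumP_le[OF g sub F cV n6], blast)
  also have "(\<Sum>x\<in>?S. ?f x) \<le> 8"
  proof -
    have "P E1 a0 b0 \<subseteq> P E a0 b0" "P E1 b0 a0 \<subseteq> P E b0 a0" by (rule P_mono[OF sub])+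
    then have "card (P E1 a0 b0) \<le> 4" "card (P E1 b0 a0) \<le> 4"
      using card_mono[OF P_finV[OF g]] s1 s2 by (metis le_trans)+
    then show ?thesis using ne by simp
  qed
  also have "(\<Sum>x\<in>D E1 - ?S. M n) = (card (D E1) - 2) * M n"
    using card_Diff_subset[OF _ Ssub] cS by simp
  finally have "8 * num_C4 E1 \<le> (card (D E1) - 2) * M n + 8" by simp
  moreover have "card (D E1) = 2 * card E1" by (rule D_card[OF g1])
  moreover have "card (D E1) \<ge> 2" using card_mono[OF finD Ssub] cS by simp
  ultimately have d2: "card (D E1) - 2 + 2 = card (D E1)" and dd: "card (D E1) = 2 * card E1" by simp_all
  have "(card (D E1) - 2) * M n + 2 * M n = (card (D E1) - 2 + 2) * M n" by (simp only: add_mult_distrib)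
  also have "\<dots> = 2 * card E1 * M n" using d2 dd by simp
  finally have "(card (D E1) - 2) * M n + 2 * M n = 2 * card E1 * M n" .
  then have "8 * num_C4 E1 + 2 * M n \<le> 2 * card E1 * M n + 8"
    using \<open>8 * num_C4 E1 \<le> (card (D E1) - 2) * M n + 8\<close> by linarith
  then show ?thesis by (simp add: mult.commute mult.left_commute)
qed

lemma deg_lower:
  assumes n6: "n \<ge> 6" and g: "grph V E" and cV: "card V = n" and F: "F2_free E" and e: "card E = K n + 1"
  shows "\<forall>v\<in>V. n div 2 \<le> card (nb E v)"
proof
  fix v assume v: "v \<in> V"
  have finV: "finite V" using g grph_def by blast
  have "card {e\<in>E. v \<notin> e} \<le> K (n - 1) + 1"
    by (rule f2_bound[OF _ del_grph[OF g]]) (use n6 cV v finV F2_free_mono[OF F] in auto)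
  moreover have "card E = card {e\<in>E. v \<notin> e} + card (nb E v)" by (rule edge_split[OF g])
  moreover have "K n = K (n - 1) + n div 2" using K_Suc[of "n - 1"] n6 by simp
  ultimately show "n div 2 \<le> card (nb E v)" using e by linarith
qed

lemma triangle_exists:
  assumes g: "grph V E" and cV: "card V = n" and e: "card E > K n"
  shows "\<exists>a b c. {a,b} \<in> E \<and> {a,c} \<in> E \<and> {b,c} \<in> E"
  using mantel[OF g cV] e by (meson not_le)

lemma incl_excl3:
  assumes "finite A" "finite B" "finite C"
  shows "card A + card B + card C \<le> card (A \<union> B \<union> C) + card (A \<inter> B) + card (A \<inter> C) + card (B \<inter> C)"
proof -
  have 1: "card A + card B = card (A \<union> B) + card (A \<inter> B)" by (rule card_Un_Int[OF assms(1,2)])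
  have 2: "card (A \<union> B) + card C = card (A \<union> B \<union> C) + card ((A \<union> B) \<inter> C)"
    by (rule card_Un_Int) (use assms in auto)
  have "(A \<union> B) \<inter> C = (A \<inter> C) \<union> (B \<inter> C)" by blast
  then have 3: "card ((A \<union> B) \<inter> C) \<le> card (A \<inter> C) + card (B \<inter> C)" by (simp add: card_Un_le)
  show ?thesis using 1 2 3 by linarith
qed

lemma card_minus2: "finite A \<Longrightarrow> x \<in> A \<Longrightarrow> y \<in> A \<Longrightarrow> x \<noteq> y \<Longrightarrow> card (A - {x,y}) + 2 = card A"
proof -
  assume a: "finite A" "x \<in> A" "y \<in> A" "x \<noteq> y"
  have "card (A - {x,y}) = card A - card {x,y}" by (rule card_Diff_subset) (use a in auto)
  moreover have "card {x,y} = 2" using a by simp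
  moreover have "card {x,y} \<le> card A" by (rule card_mono) (use a in auto)
  ultimately show ?thesis by simp
qed

lemma find_spine:
  assumes n16: "n \<ge> 16" and g: "grph V E" and cV: "card V = n"
    and deg: "\<forall>v\<in>V. n div 2 \<le> card (nb E v)"
    and t: "{u,v} \<in> E" "{u,w} \<in> E" "{v,w} \<in> E"
  shows "\<exists>a b. {a,b} \<in> E \<and> 3 \<le> card (nb E a \<inter> nb E b)"
proof (rule ccontr)
  assume H: "\<not> ?thesis"
  have H': "card (nb E a \<inter> nb E b) \<le> 2" if ab: "{a,b} \<in> E" for a b
  proof (rule ccontr)
    assume "\<not> card (nb E a \<inter> nb E b) \<le> 2"
    then have "3 \<le> card (nb E a \<inter> nb E b)" by simp
    with ab H show False by blast
  qed
  have c: "card (nb E u \<inter> nb E v) \<le> 2" "card (nb E u \<inter> nb E w) \<le> 2" "card (nb E v \<inter> nb E w) \<le> 2"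
    using H'[OF t(1)] H'[OF t(2)] H'[OF t(3)] by auto
  have d: "u \<noteq> v" "u \<noteq> w" "v \<noteq> w" "u \<in> V" "v \<in> V" "w \<in> V" using grph_edge[OF g] t by blast+
  have m: "v \<in> nb E u" "w \<in> nb E u" "u \<in> nb E v" "w \<in> nb E v" "u \<in> nb E w" "v \<in> nb E w"
    using t nb_iff by (metis insert_commute)+
  define Nu where "Nu = nb E u - {v,w}"
  define Nv where "Nv = nb E v - {u,w}"
  define Nw where "Nw = nb E w - {u,v}"
  have fins: "finite Nu" "finite Nv" "finite Nw" unfolding Nu_def Nv_def Nw_def using nb_fin[OF g] by auto
  have cu: "card Nu + 2 = card (nb E u)" unfolding Nu_def by (rule card_minus2) (use m nb_fin[OF g] d in auto)
  have cv: "card Nv + 2 = card (nb E v)" unfolding Nv_def by (rule card_minus2) (use m nb_fin[OF g] d in auto)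
  have cw: "card Nw + 2 = card (nb E w)" unfolding Nw_def by (rule card_minus2) (use m nb_fin[OF g] d in auto)
  have i1: "card (Nu \<inter> Nv) \<le> 1"
  proof -
    have "Nu \<inter> Nv = (nb E u \<inter> nb E v) - {w}" unfolding Nu_def Nv_def using nb_not[OF g] by auto
    moreover have "w \<in> nb E u \<inter> nb E v" using m by auto
    ultimately show ?thesis using c(1) nb_fin[OF g] by (simp add: card_Diff_subset)
  qed
  have i2: "card (Nu \<inter> Nw) \<le> 1"
  proof -
    have "Nu \<inter> Nw = (nb E u \<inter> nb E w) - {v}" unfolding Nu_def Nw_def using nb_not[OF g] by auto
    moreover have "v \<in> nb E u \<inter> nb E w" using m by auto
    ultimately show ?thesis using c(2) nb_fin[OF g] by (simp add: card_Diff_subset)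
  qed
  have i3: "card (Nv \<inter> Nw) \<le> 1"
  proof -
    have "Nv \<inter> Nw = (nb E v \<inter> nb E w) - {u}" unfolding Nv_def Nw_def using nb_not[OF g] by auto
    moreover have "u \<in> nb E v \<inter> nb E w" using m by auto
    ultimately show ?thesis using c(3) nb_fin[OF g] by (simp add: card_Diff_subset)
  qed
  have sub: "Nu \<union> Nv \<union> Nw \<subseteq> V - {u,v,w}"
    unfolding Nu_def Nv_def Nw_def using nb_sub[OF g] nb_not[OF g] by blast
  have finV: "finite V" using g grph_def by blast
  have "card (Nu \<union> Nv \<union> Nw) \<le> card (V - {u,v,w})" by (rule card_mono[OF _ sub]) (use finV in simp)
  also have "card (V - {u,v,w}) = n - 3" using cV d finV by (simp add: card_Diff_subset)
  finally have U: "card (Nu \<union> Nv \<union> Nw) \<le> n - 3" .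
  have IE: "card Nu + card Nv + card Nw \<le> card (Nu \<union> Nv \<union> Nw) + card (Nu \<inter> Nv) + card (Nu \<inter> Nw) + card (Nv \<inter> Nw)"
    by (rule incl_excl3[OF fins])
  have "n div 2 \<le> card (nb E u)" "n div 2 \<le> card (nb E v)" "n div 2 \<le> card (nb E w)" using deg d by auto
  moreover have "n \<le> 2 * (n div 2) + 1" by linarith
  ultimately show False using cu cv cw i1 i2 i3 U IE n16 by linarith
qed

lemma upper:
  assumes n16: "n \<ge> 16" and G: "is_graph_on n E" and F: "F2_free E" and sub: "E1 \<subseteq> E"
  shows "num_C4 E1 + card (E - E1) \<le> (n div 2 choose 2) * ((n + 1) div 2 choose 2) + 1"
proof -
  let ?V = "{..<n}"
  have g: "grph ?V E" using G unfolding is_graph_on_def grph_def by auto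
  have cV: "card ?V = n" by simp
  have n6: "n \<ge> 6" using n16 by simp
  have finE: "finite E" by (rule grph_finE[OF g])
  have e2: "card (E - E1) = card E - card E1" by (rule card_Diff_subset) (use finE sub in \<open>auto intro: finite_subset\<close>)
  have e1le: "card E1 \<le> card E" by (rule card_mono[OF finE sub])
  have eK: "card E \<le> K n + 1" by (rule f2_bound[OF _ g cV F]) (use n16 in simp)
  have T4: "4 * ((n div 2 choose 2) * ((n + 1) div 2 choose 2)) = K n * M n" by (rule fourT)
  have M4: "4 \<le> M n" by (rule M_ge4[OF n6])
  have C4: "4 * num_C4 E1 \<le> card E1 * M n" by (rule C4_bound[OF g sub F cV n6])
  define e1 where "e1 = card E1"
  define ee2 where "ee2 = card (E - E1)"
  have esum: "e1 + ee2 = card E" unfolding e1_def ee2_def using e2 e1le by simp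
  have m1: "ee2 * 4 \<le> ee2 * M n" using M4 by simp
  show ?thesis
  proof (cases "card E \<le> K n")
    case True
    have "(e1 + ee2) * M n \<le> K n * M n" using True esum by (simp add: mult_le_mono1)
    then have "e1 * M n + ee2 * M n \<le> K n * M n" by (simp add: add_mult_distrib)
    then have "4 * num_C4 E1 + 4 * ee2 \<le> K n * M n" using C4 m1 unfolding e1_def by linarith
    then show ?thesis using T4 unfolding ee2_def by linarith
  next
    case False
    then have eq: "card E = K n + 1" using eK by simp
    have deg: "\<forall>v\<in>?V. n div 2 \<le> card (nb E v)" by (rule deg_lower[OF n6 g cV F eq])
    obtain u v w where t: "{u,v} \<in> E" "{u,w} \<in> E" "{v,w} \<in> E"
      using triangle_exists[OF g cV] eq by auto
    obtain a0 b0 where ab: "{a0,b0} \<in> E" and t3: "3 \<le> card (nb E a0 \<inter> nb E b0)"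
      using find_spine[OF n16 g cV deg t] by blast
    have ba: "{b0,a0} \<in> E" using ab by (simp add: insert_commute)
    have s1: "card (P E a0 b0) \<le> 4"
      by (rule spine[OF g F ab cV deg]) (use t3 Cm_def[OF g F ab cV] in simp)
    have s2: "card (P E b0 a0) \<le> 4"
      by (rule spine[OF g F ba cV deg]) (use t3 Cm_def[OF g F ba cV] in \<open>simp add: Int_commute\<close>)
    have KM: "(e1 + ee2) * M n = K n * M n + M n" using esum eq by (simp add: algebra_simps)
    then have KM': "e1 * M n + ee2 * M n = K n * M n + M n" by (simp add: add_mult_distrib)
    show ?thesis
    proof (cases "{a0,b0} \<in> E1")
      case True
      have "4 * num_C4 E1 + M n \<le> card E1 * M n + 4" by (rule C4_bound_spine[OF g sub F cV n6 True s1 s2])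
      then have "4 * num_C4 E1 + 4 * ee2 \<le> K n * M n + 4" using KM' m1 unfolding e1_def by linarith
      then show ?thesis using T4 unfolding ee2_def by linarith
    next
      case False
      then have "{a0,b0} \<in> E - E1" using ab by blast
      then have "ee2 \<ge> 1" unfolding ee2_def using finE by (metis One_nat_def Suc_leI card_gt_0_iff empty_iff finite_Diff)
      then obtain k where k: "ee2 = k + 1" by (metis le_add_diff_inverse2)
      have "k * 4 \<le> k * M n" using M4 by simp
      moreover have "ee2 * 4 = k * 4 + 4" "ee2 * M n = k * M n + M n" using k by (simp_all add: algebra_simps)
      ultimately have "ee2 * 4 + M n \<le> ee2 * M n + 4" by linarith
      then have "4 * num_C4 E1 + 4 * ee2 \<le> K n * M n + 4" using KM' C4 unfolding e1_def by linarith
      then show ?thesis using T4 unfolding ee2_def by linarith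
    qed
  qed
qed

theorem mainTheorem9:
  shows "\<exists>N. \<forall>n\<ge>N. excol_C4_K2_F2 n =
    ((n div 2) choose 2) * (((n + 1) div 2) choose 2) + 1"
proof (intro exI allI impI)
  fix n :: nat assume n16: "16 \<le> n"
  let ?T = "((n div 2) choose 2) * (((n + 1) div 2) choose 2) + 1"
  let ?S = "{num_C4 E1 + card (E - E1) | E E1. is_graph_on n E \<and> F2_free E \<and> E1 \<subseteq> E}"
  have n4: "n \<ge> 4" using n16 by simp
  have up: "\<forall>x\<in>?S. x \<le> ?T" using upper[OF n16] by blast
  let ?x0 = "num_C4 (Eb n) + card (insert {0,1} (Eb n) - Eb n)"
  have x0S: "?x0 \<in> ?S" using E0_graph[OF n4] E0_F2[OF n4] by blast
  have "?x0 \<ge> ?T" using Eb_C4[OF n4] E0_diff[OF n4] by simp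
  then have x0T: "?x0 = ?T" using up x0S by (meson le_antisym)
  have fin: "finite ?S" by (rule finite_subset[of _ "{..?T}"]) (use up in auto)
  have "Max ?S = ?T" by (rule Max_eqI[OF fin]) (use up x0S x0T in auto)
  then show "excol_C4_K2_F2 n = ?T" unfolding excol_C4_K2_F2_def .
qed


end
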